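(* Let $q=|q|e^{i\varphi}$, where $|q|\in L^\infty(\mathbb{R})$ never vanishes and $\varphi:\mathbb{R}\to\mathbb{R}$ is locally absolutely continuous with $\partial_x\varphi\in L^\infty(\mathbb{R};\mathbb{R})$, and suppose that $u_\pm:=\frac12\partial_x\varphi\pm|q|\in L^\infty(\mathbb{R};\mathbb{R})$. Let $$L=\begin{pmatrix} i\partial_x & -iq\\ i\bar q & -i\partial_x\end{pmatrix}:H^1(\mathbb{R};\mathbb{C}^2)\to L^2(\mathbb{R};\mathbb{C}^2),\qquad \mathcal{L}=\begin{pmatrix} -u_- & i\partial_x\\ i\partial_x & -u_+\end{pmatrix}:H^1(\mathbb{R};\mathbb{C}^2)\to L^2(\mathbb{R};\mathbb{C}^2),$$ and let $M$ be the multiplication operator by the unitary matrix $$M=\frac1{\sqrt2}\begin{pmatrix} e^{-\frac12 i(\varphi-\frac\pi2)} & e^{\frac12 i(\varphi-\frac\pi2)}\\ e^{-\frac12 i(\varphi-\frac\pi2)} & -e^{\frac12 i(\varphi-\frac\pi2)}\end{pmatrix}.$$ Then $M$ maps $H^s(\mathbb{R};\mathbb{C}^2)$ bijectively onto itself for $s=0,1$, and $L$ and $\mathcal{L}$ are unitarily equivalent: $L=M^\ast\mathcal{L}M$.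
   Context: $L$ is the Lax operator of the one-dimensional cubic defocusing nonlinear Schrödinger equation $i\partial_t q+\partial_{xx}q=2|q|^2q$; $M^\ast$ denotes the conjugate transpose of $M$ (pointwise), which is its inverse. *)

theory Defs
  imports "HOL-Analysis.Analysis"
begin

text \<open>Vectors of C^2 are modelled as complex^2, 2x2 complex matrices as complex^2^2.
  Functions R -> C^2 are handled via pointwise representatives.\<close>

definition vec2 :: "complex \<Rightarrow> complex \<Rightarrow> complex^2" where
  "vec2 a b = (\<chi> i. if i = 1 then a else b)"

definition mat2 :: "complex \<Rightarrow> complex \<Rightarrow> complex \<Rightarrow> complex \<Rightarrow> complex^2^2" where
  "mat2 a b c d = (\<chi> i. if i = 1 then vec2 a b else vec2 c d)"

definition adjoint_mat :: "complex^'n^'n \<Rightarrow> complex^'n^'n" where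
  "adjoint_mat A = (\<chi> i j. cnj (A $ j $ i))"

definition ess_bounded :: "(real \<Rightarrow> real) \<Rightarrow> bool" where
  "ess_bounded f \<longleftrightarrow> f \<in> borel_measurable lborel \<and> (\<exists>C. AE x in lborel. \<bar>f x\<bar> \<le> C)"

definition loc_AC_with_deriv :: "(real \<Rightarrow> real) \<Rightarrow> (real \<Rightarrow> real) \<Rightarrow> bool" where
  "loc_AC_with_deriv f df \<longleftrightarrow>
     (\<forall>a b. set_integrable lborel {a..b} df) \<and>
     (\<forall>a b. a \<le> b \<longrightarrow> f b - f a = (LINT t:{a..b}|lborel. df t))"

definition L2 :: "(real \<Rightarrow> complex) \<Rightarrow> bool" where
  "L2 f \<longleftrightarrow> f \<in> borel_measurable lborel \<and> integrable lborel (\<lambda>x. (cmod (f x))\<^sup>2)"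

definition L2v :: "(real \<Rightarrow> complex^2) \<Rightarrow> bool" where
  "L2v u \<longleftrightarrow> (\<forall>i. L2 (\<lambda>x. u x $ i))"

text \<open>u' is an L^2 (weak) derivative of u, with u the locally absolutely continuous
  representative: u(b) - u(a) = integral of u' over [a,b].\<close>
definition H1_deriv :: "(real \<Rightarrow> complex^2) \<Rightarrow> (real \<Rightarrow> complex^2) \<Rightarrow> bool" where
  "H1_deriv u u' \<longleftrightarrow> L2v u' \<and>
     (\<forall>i a b. set_integrable lborel {a..b} (\<lambda>t. u' t $ i) \<and>
        (a \<le> b \<longrightarrow> u b $ i - u a $ i = (LINT t:{a..b}|lborel. u' t $ i)))"

definition L2set :: "(real \<Rightarrow> complex^2) set" where
  "L2set = {u. L2v u}"

definition H1set :: "(real \<Rightarrow> complex^2) set" where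
  "H1set = {u. L2v u \<and> (\<exists>u'. H1_deriv u u')}"

definition Mmat :: "(real \<Rightarrow> real) \<Rightarrow> real \<Rightarrow> complex^2^2" where
  "Mmat phi x =
     (let a = exp (- \<i> * complex_of_real ((phi x - pi / 2) / 2)) / complex_of_real (sqrt 2);
          b = exp (\<i> * complex_of_real ((phi x - pi / 2) / 2)) / complex_of_real (sqrt 2)
      in mat2 a b a (- b))"

definition Lax_op :: "(real \<Rightarrow> complex) \<Rightarrow> (real \<Rightarrow> complex^2) \<Rightarrow> (real \<Rightarrow> complex^2) \<Rightarrow> real \<Rightarrow> complex^2" where
  "Lax_op q u u' x =
     vec2 (\<i> * u' x $ 1 - \<i> * q x * u x $ 2) (\<i> * cnj (q x) * u x $ 1 - \<i> * u' x $ 2)"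

definition calL_op :: "(real \<Rightarrow> real) \<Rightarrow> (real \<Rightarrow> real) \<Rightarrow> (real \<Rightarrow> complex^2) \<Rightarrow> (real \<Rightarrow> complex^2) \<Rightarrow> real \<Rightarrow> complex^2" where
  "calL_op um up v v' x =
     vec2 (- complex_of_real (um x) * v x $ 1 + \<i> * v' x $ 2)
          (\<i> * v' x $ 1 - complex_of_real (up x) * v x $ 2)"

end

theory Submission
  imports Defs "HOL-Probability.Characteristic_Functions"
begin


definition hAC :: "(real \<Rightarrow> 'a::euclidean_space) \<Rightarrow> (real \<Rightarrow> 'a) \<Rightarrow> bool" where
  "hAC F G \<longleftrightarrow> (\<forall>a b. G absolutely_integrable_on {a..b}) \<and>
     (\<forall>a b. a \<le> b \<longrightarrow> F b - F a = integral {a..b} G)"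

lemma hAC_int: "hAC F G \<Longrightarrow> G integrable_on {a..b}"
proof -
  assume "hAC F G"
  then have "G absolutely_integrable_on {a..b}" by (simp add: hAC_def)
  then show ?thesis by (rule set_lebesgue_integral_eq_integral(1))
qed

lemma hAC_eq: "hAC F G \<Longrightarrow> a \<le> b \<Longrightarrow> F b - F a = integral {a..b} G"
  unfolding hAC_def by blast

lemma hAC_abs: "hAC F G \<Longrightarrow> G absolutely_integrable_on {a..b}"
  unfolding hAC_def by blast

lemma hAC_cong: "hAC F G \<Longrightarrow> (\<And>x. F x = F2 x) \<Longrightarrow> (\<And>x. G x = G2 x) \<Longrightarrow> hAC F2 G2"
proof -
  assume "hAC F G" "\<And>x. F x = F2 x" "\<And>x. G x = G2 x"
  then have "F = F2" "G = G2" by auto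
  then show ?thesis using \<open>hAC F G\<close> by simp
qed

lemma hAC_cont_on: "hAC F G \<Longrightarrow> continuous_on {a..b} F"
proof -
  assume h: "hAC F G"
  have "continuous_on {a..b} (\<lambda>x. F a + integral {a..x} G)"
    by (intro continuous_intros indefinite_integral_continuous_1 hAC_int[OF h])
  moreover have "F a + integral {a..x} G = F x" if "x \<in> {a..b}" for x
  proof -
    have "F x - F a = integral {a..x} G" using that by (intro hAC_eq[OF h]) simp
    then show ?thesis by (simp add: algebra_simps)
  qed
  ultimately show ?thesis by (rule continuous_on_eq)
qed

lemma hAC_cont: "hAC F G \<Longrightarrow> continuous_on UNIV F"
proof -
  assume h: "hAC F G"
  have "isCont F x" for x
  proof -
    have "continuous_on {x-1..x+1} F" by (rule hAC_cont_on[OF h])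
    moreover have "x \<in> interior {x-1..x+1}" by simp
    ultimately show ?thesis using continuous_on_interior by blast
  qed
  then show ?thesis by (simp add: continuous_at_imp_continuous_on)
qed

lemma int_sub:
  fixes G :: "real \<Rightarrow> 'a::banach"
  assumes "G integrable_on {a..b}" "a \<le> x" "x \<le> y" "y \<le> b"
  shows "integral {x..y} G = integral {a..y} G - integral {a..x} G"
proof -
  have "G integrable_on {a..y}" by (rule integrable_subinterval_real[OF assms(1)]) (use assms in auto)
  from Henstock_Kurzweil_Integration.integral_combine[OF assms(2) assms(3) this] show ?thesis by (simp add: algebra_simps)
qed

lemma hAC_add: "hAC F G \<Longrightarrow> hAC F2 G2 \<Longrightarrow> hAC (\<lambda>x. F x + F2 x) (\<lambda>x. G x + G2 x)"
proof -
  assume h: "hAC F G" "hAC F2 G2"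
  show ?thesis unfolding hAC_def
  proof (intro conjI allI impI)
    fix a b show "(\<lambda>x. G x + G2 x) absolutely_integrable_on {a..b}"
      by (rule set_integral_add(1)) (use h in \<open>auto simp: hAC_def\<close>)
  next
    fix a b :: real assume "a \<le> b"
    then show "F b + F2 b - (F a + F2 a) = integral {a..b} (\<lambda>x. G x + G2 x)"
    proof -
      have "integral {a..b} (\<lambda>x. G x + G2 x) = integral {a..b} G + integral {a..b} G2"
        by (rule integral_add[OF hAC_int[OF h(1)] hAC_int[OF h(2)]])
      also have "\<dots> = (F b - F a) + (F2 b - F2 a)"
        using hAC_eq[OF h(1) \<open>a \<le> b\<close>] hAC_eq[OF h(2) \<open>a \<le> b\<close>] by simp
      finally show ?thesis by (simp add: algebra_simps)
    qed
  qed
qed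

lemma hAC_scale: "hAC F G \<Longrightarrow> hAC (\<lambda>x. c *\<^sub>R F x + k) (\<lambda>x. c *\<^sub>R G x)"
proof -
  assume h: "hAC F G"
  show ?thesis unfolding hAC_def
  proof (intro conjI allI impI)
    fix a b show "(\<lambda>x. c *\<^sub>R G x) absolutely_integrable_on {a..b}"
      by (rule set_integrable_scaleR_right) (use h in \<open>simp add: hAC_def\<close>)
  next
    fix a b :: real assume "a \<le> b"
    have "integral {a..b} (\<lambda>x. c *\<^sub>R G x) = c *\<^sub>R integral {a..b} G"
      by (rule integral_cmul)
    also have "\<dots> = c *\<^sub>R (F b - F a)" using hAC_eq[OF h \<open>a \<le> b\<close>] by simp
    finally show "c *\<^sub>R F b + k - (c *\<^sub>R F a + k) = integral {a..b} (\<lambda>x. c *\<^sub>R G x)"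
      by (simp add: scaleR_right_diff_distrib)
  qed
qed

lemma hAC_cmult: "hAC F G \<Longrightarrow> hAC (\<lambda>x. (c::complex) * F x) (\<lambda>x. c * G x)"
proof -
  assume h: "hAC F G"
  show ?thesis unfolding hAC_def
  proof (intro conjI allI impI)
    fix a b show "(\<lambda>x. c * G x) absolutely_integrable_on {a..b}"
      by (rule set_integrable_mult_right) (use h in \<open>simp add: hAC_def\<close>)
  next
    fix a b :: real assume "a \<le> b"
    have "integral {a..b} (\<lambda>x. c * G x) = c * integral {a..b} G"
      by (rule integral_mult_right)
    also have "\<dots> = c * (F b - F a)" using hAC_eq[OF h \<open>a \<le> b\<close>] by simp
    finally show "c * F b - c * F a = integral {a..b} (\<lambda>x. c * G x)"
      by (simp add: right_diff_distrib)
  qed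
qed



lemma LG:
  fixes H :: "real \<Rightarrow> 'a::real_normed_vector" and \<rho> :: "real \<Rightarrow> real"
  assumes ab: "a \<le> b"
    and loc: "\<And>e. e > 0 \<Longrightarrow> \<exists>d>0. \<forall>x y. a \<le> x \<longrightarrow> x \<le> y \<longrightarrow> y \<le> b \<longrightarrow> y - x < d \<longrightarrow>
                 norm (H y - H x) \<le> e * (\<rho> y - \<rho> x)"
  shows "H b = H a"
proof -
  have main: "norm (H b - H a) \<le> e * (\<rho> b - \<rho> a)" if "e > 0" for e
  proof -
    obtain d where d: "d > 0" and hd: "\<And>x y. a \<le> x \<Longrightarrow> x \<le> y \<Longrightarrow> y \<le> b \<Longrightarrow> y - x < d \<Longrightarrow>
                 norm (H y - H x) \<le> e * (\<rho> y - \<rho> x)"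
      using loc[OF \<open>e > 0\<close>] by blast
    obtain n :: nat where n: "(b - a) / d < real n" using reals_Archimedean2 by blast
    have "(b - a) / d \<ge> 0" using ab d by simp
    then have npos: "n > 0" using n by (cases n) auto
    define t where "t k = a + real k * (b - a) / real n" for k
    have t0: "t 0 = a" and tn: "t n = b" using npos by (auto simp: t_def)
    have step: "t (Suc k) - t k = (b - a) / real n" for k
      unfolding t_def by (simp add: divide_simps algebra_simps)
    have stepd: "(b - a) / real n < d" using n npos d
      by (simp add: field_simps)
    have nn: "(b - a) / real n \<ge> 0" using ab by simp
    have tmono: "t k \<le> t (Suc k)" for k using step[of k] nn by linarith
    have tge: "a \<le> t k" for k using ab npos by (simp add: t_def)
    have tle: "k < n \<Longrightarrow> t (Suc k) \<le> b" for k
    proof -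
      assume "k < n"
      then have "(real k + 1) * (b-a) \<le> real n * (b-a)" using ab by (intro mult_right_mono) auto
      then show ?thesis using npos by (simp add: t_def field_simps algebra_simps)
    qed
    have "H b - H a = (\<Sum>k<n. H (t (Suc k)) - H (t k))"
      using sum_lessThan_telescope[of "\<lambda>k. H (t k)" n] by (simp add: t0 tn)
    then have "norm (H b - H a) \<le> (\<Sum>k<n. norm (H (t (Suc k)) - H (t k)))"
      by (simp add: norm_sum)
    also have "\<dots> \<le> (\<Sum>k<n. e * (\<rho> (t (Suc k)) - \<rho> (t k)))"
      by (intro sum_mono hd tge tmono tle) (auto simp: step stepd)
    also have "\<dots> = e * (\<rho> b - \<rho> a)"
      using sum_lessThan_telescope[of "\<lambda>k. \<rho> (t k)" n] by (simp add: sum_distrib_left[symmetric] t0 tn)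
    finally show ?thesis .
  qed
  have "norm (H b - H a) \<le> 0"
  proof (cases "\<rho> b - \<rho> a \<le> 0")
    case True
    have "norm (H b - H a) \<le> 1 * (\<rho> b - \<rho> a)" by (rule main) simp
    then show ?thesis using True by (simp only: mult_1)
  next
    case False
    show ?thesis
    proof (rule field_le_epsilon)
      fix e :: real assume "e > 0"
      have pos: "\<rho> b - \<rho> a > 0" using False by linarith
      have "norm (H b - H a) \<le> (e / (\<rho> b - \<rho> a)) * (\<rho> b - \<rho> a)"
        by (rule main) (use pos \<open>e > 0\<close> in simp)
      also have "\<dots> = e" using pos by (simp add: field_simps)
      finally show "norm (H b - H a) \<le> 0 + e" by (simp only: add_0_left)
    qed
  qed
  then show ?thesis by (simp only: norm_le_zero_iff right_minus_eq)
qed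



lemma ai_int: "f absolutely_integrable_on S \<Longrightarrow> (f :: real \<Rightarrow> 'a::euclidean_space) integrable_on S"
  by (rule set_lebesgue_integral_eq_integral(1))

lemma ai_norm_int: "f absolutely_integrable_on S \<Longrightarrow> (\<lambda>x. norm ((f :: real \<Rightarrow> 'a::euclidean_space) x)) integrable_on S"
  by (simp add: absolutely_integrable_on_def)

lemma ai_cont_mult:
  fixes f g :: "real \<Rightarrow> complex"
  assumes "continuous_on {a..b} f" "g absolutely_integrable_on {a..b}"
  shows "(\<lambda>x. f x * g x) absolutely_integrable_on {a..b}"
proof (rule absolutely_integrable_bounded_measurable_product[OF bilinear_times _ _ _ assms(2)])
  show "f \<in> borel_measurable (lebesgue_on {a..b})"
    by (rule continuous_imp_measurable_on_sets_lebesgue[OF assms(1)]) simp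
  show "{a..b} \<in> sets lebesgue" by simp
  show "bounded (f ` {a..b})"
    by (rule compact_imp_bounded, rule compact_continuous_image[OF assms(1)]) simp
qed

lemma ai_cont_mult2:
  fixes f g :: "real \<Rightarrow> complex"
  assumes "continuous_on {a..b} f" "g absolutely_integrable_on {a..b}"
  shows "(\<lambda>x. g x * f x) absolutely_integrable_on {a..b}"
  using ai_cont_mult[OF assms] by (simp add: mult.commute)

lemma unif_cont_interval:
  fixes f :: "real \<Rightarrow> 'a::metric_space"
  assumes "continuous_on UNIV f" "e > 0"
  obtains d where "d > 0" "\<And>x y. x \<in> {a..b} \<Longrightarrow> y \<in> {a..b} \<Longrightarrow> dist y x < d \<Longrightarrow> dist (f y) (f x) < e"
proof -
  have "uniformly_continuous_on {a..b} f"
    by (rule compact_uniformly_continuous) (use assms(1) continuous_on_subset in auto)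
  then show ?thesis using assms(2) that unfolding uniformly_continuous_on_def by metis
qed

lemma aux_ring: "(fy::complex)*gy - fx*gx - (I1 + I2) = ((fy - fx)*gy - I1) + (fx*(gy - gx) - I2)"
  by (simp add: algebra_simps)

lemma hAC_mult:
  fixes f g :: "real \<Rightarrow> complex"
  assumes hf: "hAC f f'" and hg: "hAC g g'"
  shows "hAC (\<lambda>x. f x * g x) (\<lambda>x. f' x * g x + f x * g' x)"
proof -
  have cf: "continuous_on UNIV f" by (rule hAC_cont[OF hf])
  have cg: "continuous_on UNIV g" by (rule hAC_cont[OF hg])
  have cf': "continuous_on {a..b} f" for a b using cf continuous_on_subset by blast
  have cg': "continuous_on {a..b} g" for a b using cg continuous_on_subset by blast
  have ai1: "(\<lambda>x. f' x * g x) absolutely_integrable_on {a..b}" for a b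
    by (rule ai_cont_mult2[OF cg' hAC_abs[OF hf]])
  have ai2: "(\<lambda>x. f x * g' x) absolutely_integrable_on {a..b}" for a b
    by (rule ai_cont_mult[OF cf' hAC_abs[OF hg]])
  define P where "P = (\<lambda>x. f' x * g x + f x * g' x)"
  have aiP: "P absolutely_integrable_on {a..b}" for a b
    unfolding P_def by (rule set_integral_add(1)[OF ai1 ai2])
  define R where "R = (\<lambda>t. norm (f' t) + norm (g' t))"
  have intR: "R integrable_on {a..b}" for a b
    unfolding R_def by (intro integrable_add ai_norm_int hAC_abs[OF hf] hAC_abs[OF hg])
  show ?thesis unfolding hAC_def
  proof (intro conjI allI impI)
    fix a b show "(\<lambda>x. f' x * g x + f x * g' x) absolutely_integrable_on {a..b}"
      using aiP unfolding P_def .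
  next
    fix a b :: real assume ab: "a \<le> b"
    define H where "H x = f x * g x - integral {a..x} P" for x
    have "H b = H a"
    proof (rule LG[OF ab, where \<rho> = "\<lambda>x. integral {a..x} R"])
      fix e :: real assume "e > 0"
      obtain d1 where d1: "d1 > 0" and hd1: "\<And>x y. x \<in> {a..b} \<Longrightarrow> y \<in> {a..b} \<Longrightarrow> dist y x < d1 \<Longrightarrow> dist (g y) (g x) < e"
        using unif_cont_interval[OF cg \<open>e > 0\<close>] by blast
      obtain d2 where d2: "d2 > 0" and hd2: "\<And>x y. x \<in> {a..b} \<Longrightarrow> y \<in> {a..b} \<Longrightarrow> dist y x < d2 \<Longrightarrow> dist (f y) (f x) < e"
        using unif_cont_interval[OF cf \<open>e > 0\<close>] by blast
      show "\<exists>d>0. \<forall>x y. a \<le> x \<longrightarrow> x \<le> y \<longrightarrow> y \<le> b \<longrightarrow> y - x < d \<longrightarrow>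
                 norm (H y - H x) \<le> e * (integral {a..y} R - integral {a..x} R)"
      proof (intro exI[of _ "min d1 d2"] conjI allI impI)
        show "min d1 d2 > 0" using d1 d2 by simp
        fix x y assume xy: "a \<le> x" "x \<le> y" "y \<le> b" "y - x < min d1 d2"
        have f'i: "f' integrable_on {x..y}" by (rule hAC_int[OF hf])
        have g'i: "g' integrable_on {x..y}" by (rule hAC_int[OF hg])
        have i1i: "(\<lambda>t. f' t * g t) integrable_on {x..y}" by (rule ai_int[OF ai1])
        have i2i: "(\<lambda>t. f x * g' t) integrable_on {x..y}" by (rule integrable_on_mult_right[OF g'i])
        have i3i: "(\<lambda>t. f' t * g y) integrable_on {x..y}" by (rule integrable_on_mult_left[OF f'i])
        have i4i: "(\<lambda>t. f t * g' t) integrable_on {x..y}" by (rule ai_int[OF ai2])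
        have ef: "f y - f x = integral {x..y} f'" by (rule hAC_eq[OF hf xy(2)])
        have eg: "g y - g x = integral {x..y} g'" by (rule hAC_eq[OF hg xy(2)])
        have eP: "integral {a..y} P - integral {a..x} P = integral {x..y} P"
          using int_sub[OF ai_int[OF aiP] xy(1) xy(2) xy(3)] by simp
        have eR: "integral {a..y} R - integral {a..x} R = integral {x..y} R"
          using int_sub[OF intR xy(1) xy(2) xy(3)] by simp
        have IP: "integral {x..y} P = integral {x..y} (\<lambda>t. f' t * g t) + integral {x..y} (\<lambda>t. f t * g' t)"
          unfolding P_def by (rule integral_add[OF i1i i4i])
        have A: "integral {x..y} (\<lambda>t. f' t * (g y - g t)) = (f y - f x) * g y - integral {x..y} (\<lambda>t. f' t * g t)"
        proof -
          have "integral {x..y} (\<lambda>t. f' t * (g y - g t)) = integral {x..y} (\<lambda>t. f' t * g y - f' t * g t)"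
            by (simp add: algebra_simps)
          also have "\<dots> = integral {x..y} (\<lambda>t. f' t * g y) - integral {x..y} (\<lambda>t. f' t * g t)"
            by (rule integral_diff[OF i3i i1i])
          also have "integral {x..y} (\<lambda>t. f' t * g y) = (f y - f x) * g y"
            by (simp add: integral_mult_left ef)
          finally show ?thesis .
        qed
        have B: "integral {x..y} (\<lambda>t. (f x - f t) * g' t) = f x * (g y - g x) - integral {x..y} (\<lambda>t. f t * g' t)"
        proof -
          have "integral {x..y} (\<lambda>t. (f x - f t) * g' t) = integral {x..y} (\<lambda>t. f x * g' t - f t * g' t)"
            by (simp add: algebra_simps)
          also have "\<dots> = integral {x..y} (\<lambda>t. f x * g' t) - integral {x..y} (\<lambda>t. f t * g' t)"
            by (rule integral_diff[OF i2i i4i])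
          also have "integral {x..y} (\<lambda>t. f x * g' t) = f x * (g y - g x)"
            by (simp add: integral_mult_right eg)
          finally show ?thesis .
        qed
        have HE: "H y - H x = integral {x..y} (\<lambda>t. f' t * (g y - g t)) + integral {x..y} (\<lambda>t. (f x - f t) * g' t)"
        proof -
          have "H y - H x = f y * g y - f x * g x - (integral {a..y} P - integral {a..x} P)"
            by (simp add: H_def algebra_simps)
          also have "\<dots> = f y * g y - f x * g x - integral {x..y} P" by (simp add: eP)
          also have "\<dots> = f y * g y - f x * g x - (integral {x..y} (\<lambda>t. f' t * g t) + integral {x..y} (\<lambda>t. f t * g' t))"
            by (simp only: IP)
          finally show ?thesis unfolding A B by (rule trans[OF _ aux_ring])
        qed
        have N1: "norm (integral {x..y} (\<lambda>t. f' t * (g y - g t))) \<le> integral {x..y} (\<lambda>t. e * norm (f' t))"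
        proof (rule integral_norm_bound_integral)
          show "(\<lambda>t. f' t * (g y - g t)) integrable_on {x..y}"
            by (simp add: right_diff_distrib integrable_diff[OF i3i i1i])
          show "(\<lambda>t. e * norm (f' t)) integrable_on {x..y}"
            by (rule integrable_on_mult_right, rule ai_norm_int, rule hAC_abs[OF hf])
          fix t assume t: "t \<in> {x..y}"
          have "dist (g y) (g t) < e" using t xy by (intro hd1) (auto simp: dist_real_def)
          then have "norm (g y - g t) \<le> e" by (simp add: dist_norm)
          then show "norm (f' t * (g y - g t)) \<le> e * norm (f' t)"
            by (simp add: norm_mult mult.commute[of e] mult_left_mono)
        qed
        have N2: "norm (integral {x..y} (\<lambda>t. (f x - f t) * g' t)) \<le> integral {x..y} (\<lambda>t. e * norm (g' t))"
        proof (rule integral_norm_bound_integral)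
          show "(\<lambda>t. (f x - f t) * g' t) integrable_on {x..y}"
            by (simp add: left_diff_distrib integrable_diff[OF i2i i4i])
          show "(\<lambda>t. e * norm (g' t)) integrable_on {x..y}"
            by (rule integrable_on_mult_right, rule ai_norm_int, rule hAC_abs[OF hg])
          fix t assume t: "t \<in> {x..y}"
          have "dist (f t) (f x) < e" using t xy by (intro hd2) (auto simp: dist_real_def)
          then have "norm (f x - f t) \<le> e" by (simp add: dist_norm norm_minus_commute)
          then show "norm ((f x - f t) * g' t) \<le> e * norm (g' t)"
            by (simp add: norm_mult mult_right_mono)
        qed
        have "integral {x..y} (\<lambda>t. e * norm (f' t)) + integral {x..y} (\<lambda>t. e * norm (g' t))
              = e * integral {x..y} R"
        proof -
          have "integral {x..y} (\<lambda>t. e * norm (f' t)) + integral {x..y} (\<lambda>t. e * norm (g' t))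
              = e * integral {x..y} (\<lambda>t. norm (f' t)) + e * integral {x..y} (\<lambda>t. norm (g' t))"
            by (simp add: integral_mult_right)
          also have "\<dots> = e * (integral {x..y} (\<lambda>t. norm (f' t)) + integral {x..y} (\<lambda>t. norm (g' t)))"
            by (simp add: algebra_simps)
          also have "integral {x..y} (\<lambda>t. norm (f' t)) + integral {x..y} (\<lambda>t. norm (g' t)) = integral {x..y} R"
            unfolding R_def
            by (rule integral_add[symmetric]; rule ai_norm_int; rule hAC_abs; fact)
          finally show ?thesis .
        qed
        then show "norm (H y - H x) \<le> e * (integral {a..y} R - integral {a..x} R)"
          using HE N1 N2 norm_triangle_ineq[of "integral {x..y} (\<lambda>t. f' t * (g y - g t))"
                                                "integral {x..y} (\<lambda>t. (f x - f t) * g' t)"]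
          by (simp add: eR)
      qed
    qed
    then show "f b * g b - f a * g a = integral {a..b} (\<lambda>x. f' x * g x + f x * g' x)"
      by (simp add: H_def P_def algebra_simps)
  qed
qed



lemma hAC_ofreal:
  fixes \<theta> \<theta>' :: "real \<Rightarrow> real"
  assumes h: "hAC \<theta> \<theta>'"
  shows "hAC (\<lambda>x. complex_of_real (\<theta> x)) (\<lambda>x. complex_of_real (\<theta>' x))"
  unfolding hAC_def
proof (intro conjI allI impI)
  fix a b
  show "(\<lambda>x. complex_of_real (\<theta>' x)) absolutely_integrable_on {a..b}"
    using absolutely_integrable_linear[OF hAC_abs[OF h] bounded_linear_of_real] by (simp add: o_def)
next
  fix a b :: real assume "a \<le> b"
  have "integral {a..b} (\<lambda>x. complex_of_real (\<theta>' x)) = of_real (integral {a..b} \<theta>')"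
    using integral_linear[OF hAC_int[OF h] bounded_linear_of_real] by (simp add: o_def)
  also have "\<dots> = of_real (\<theta> b - \<theta> a)" using hAC_eq[OF h \<open>a \<le> b\<close>] by simp
  finally show "complex_of_real (\<theta> b) - complex_of_real (\<theta> a) = integral {a..b} (\<lambda>x. complex_of_real (\<theta>' x))"
    by simp
qed

lemma exp_quad: "cmod (exp (\<i> * complex_of_real d) - 1 - \<i> * complex_of_real d) \<le> d^2 / 2"
  using iexp_approx1[of d "Suc 0"] by (simp add: numeral_2_eq_2 algebra_simps)

lemma hAC_exp:
  fixes \<theta> \<theta>' :: "real \<Rightarrow> real"
  assumes h: "hAC \<theta> \<theta>'"
  shows "hAC (\<lambda>x. exp (\<i> * complex_of_real (\<theta> x))) (\<lambda>x. \<i> * complex_of_real (\<theta>' x) * exp (\<i> * complex_of_real (\<theta> x)))"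
proof -
  define E where "E x = exp (\<i> * complex_of_real (\<theta> x))" for x
  define T' where "T' x = complex_of_real (\<theta>' x)" for x
  have hc: "hAC (\<lambda>x. complex_of_real (\<theta> x)) T'" unfolding T'_def by (rule hAC_ofreal[OF h])
  have ct: "continuous_on UNIV \<theta>" by (rule hAC_cont[OF h])
  have cE: "continuous_on UNIV E" unfolding E_def by (intro continuous_intros ct)
  have cE': "continuous_on {a..b} E" for a b using cE continuous_on_subset by blast
  have aiT: "(\<lambda>x. \<i> * T' x) absolutely_integrable_on {a..b}" for a b
    by (rule set_integrable_mult_right) (use hAC_abs[OF hc] in simp)
  define G where "G x = \<i> * T' x * E x" for x
  have aiG: "G absolutely_integrable_on {a..b}" for a b
    unfolding G_def by (rule ai_cont_mult2[OF cE' aiT])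
  define R where "R t = 2 * norm (T' t)" for t
  have intR: "R integrable_on {a..b}" for a b
    unfolding R_def by (intro integrable_on_mult_right ai_norm_int hAC_abs[OF hc])
  have "hAC E G" unfolding hAC_def
  proof (intro conjI allI impI)
    fix a b show "G absolutely_integrable_on {a..b}" by (rule aiG)
  next
    fix a b :: real assume ab: "a \<le> b"
    define H where "H x = E x - integral {a..x} G" for x
    have "H b = H a"
    proof (rule LG[OF ab, where \<rho> = "\<lambda>x. integral {a..x} R"])
      fix e :: real assume "e > 0"
      obtain d1 where d1: "d1 > 0" and hd1: "\<And>x y. x \<in> {a..b} \<Longrightarrow> y \<in> {a..b} \<Longrightarrow> dist y x < d1 \<Longrightarrow> dist (E y) (E x) < e"
        using unif_cont_interval[OF cE \<open>e > 0\<close>] by blast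
      obtain d2 where d2: "d2 > 0" and hd2: "\<And>x y. x \<in> {a..b} \<Longrightarrow> y \<in> {a..b} \<Longrightarrow> dist y x < d2 \<Longrightarrow> dist (\<theta> y) (\<theta> x) < e"
        using unif_cont_interval[OF ct \<open>e > 0\<close>] by blast
      show "\<exists>d>0. \<forall>x y. a \<le> x \<longrightarrow> x \<le> y \<longrightarrow> y \<le> b \<longrightarrow> y - x < d \<longrightarrow>
                 norm (H y - H x) \<le> e * (integral {a..y} R - integral {a..x} R)"
      proof (intro exI[of _ "min d1 d2"] conjI allI impI)
        show "min d1 d2 > 0" using d1 d2 by simp
        fix x y assume xy: "a \<le> x" "x \<le> y" "y \<le> b" "y - x < min d1 d2"
        define D where "D = \<theta> y - \<theta> x"
        have T'i: "T' integrable_on {x..y}" by (rule hAC_int[OF hc])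
        have Gi: "G integrable_on {x..y}" by (rule ai_int[OF aiG])
        have nT'i: "(\<lambda>t. norm (T' t)) integrable_on {x..y}" by (rule ai_norm_int[OF hAC_abs[OF hc]])
        have eD: "complex_of_real D = integral {x..y} T'"
          using hAC_eq[OF hc xy(2)] by (simp add: D_def)
        have eG: "integral {a..y} G - integral {a..x} G = integral {x..y} G"
          using int_sub[OF ai_int[OF aiG] xy(1) xy(2) xy(3)] by simp
        have eR: "integral {a..y} R - integral {a..x} R = integral {x..y} R"
          using int_sub[OF intR xy(1) xy(2) xy(3)] by simp
        have Ey: "E y = E x * exp (\<i> * complex_of_real D)"
          by (simp add: E_def D_def exp_add[symmetric] algebra_simps)
        have nE: "norm (E x) = 1" by (simp add: E_def)
        have i1: "(\<lambda>t. \<i> * T' t * E x) integrable_on {x..y}"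
          by (intro integrable_on_mult_left integrable_on_mult_right T'i)
        have I1: "integral {x..y} (\<lambda>t. \<i> * T' t * E x) = \<i> * complex_of_real D * E x"
          unfolding eD by (simp add: integral_mult_left integral_mult_right)
        have HE: "H y - H x = E x * (exp (\<i> * complex_of_real D) - 1 - \<i> * complex_of_real D)
                     + integral {x..y} (\<lambda>t. \<i> * T' t * E x - G t)"
        proof -
          define IX where "IX = integral {x..y} (\<lambda>t. \<i> * T' t * E x - G t)"
          define IG where "IG = integral {x..y} G"
          have 1: "IX = \<i> * complex_of_real D * E x - IG"
            unfolding IX_def IG_def by (simp only: integral_diff[OF i1 Gi] I1)
          have 2: "H y - H x = E y - E x - IG"
            unfolding IG_def by (simp add: H_def eG[symmetric] algebra_simps)
          show ?thesis unfolding IX_def[symmetric] 2 1 Ey by (simp add: algebra_simps)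
        qed
        have nD: "\<bar>D\<bar> \<le> integral {x..y} (\<lambda>t. norm (T' t))"
        proof -
          have "norm (integral {x..y} T') \<le> integral {x..y} (\<lambda>t. norm (T' t))"
            by (rule integral_norm_bound_integral[OF T'i nT'i]) simp
          then show ?thesis by (simp flip: eD)
        qed
        have De: "\<bar>D\<bar> < e"
          using hd2[of x y] xy by (simp add: D_def dist_real_def)
        have N1: "norm (E x * (exp (\<i> * complex_of_real D) - 1 - \<i> * complex_of_real D)) \<le> e * integral {x..y} (\<lambda>t. norm (T' t))"
        proof -
          have "norm (E x * (exp (\<i> * complex_of_real D) - 1 - \<i> * complex_of_real D)) \<le> D^2 / 2"
            by (simp only: norm_mult nE mult_1_left) (rule exp_quad)
          also have "\<dots> \<le> \<bar>D\<bar> * e"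
          proof -
            have s1: "D^2 = \<bar>D\<bar> * \<bar>D\<bar>" by (simp add: power2_eq_square[symmetric])
            have s2: "\<bar>D\<bar> * \<bar>D\<bar> \<le> \<bar>D\<bar> * e" using De by (intro mult_left_mono) auto
            have s3: "D^2 \<ge> 0" by simp
            show ?thesis using s1 s2 s3 by linarith
          qed
          also have "\<dots> \<le> e * integral {x..y} (\<lambda>t. norm (T' t))"
            using nD \<open>e > 0\<close> by (simp add: mult.commute mult_left_mono)
          finally show ?thesis .
        qed
        have N2: "norm (integral {x..y} (\<lambda>t. \<i> * T' t * E x - G t)) \<le> integral {x..y} (\<lambda>t. e * norm (T' t))"
        proof (rule integral_norm_bound_integral)
          show "(\<lambda>t. \<i> * T' t * E x - G t) integrable_on {x..y}"
            by (rule integrable_diff[OF i1 Gi])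
          show "(\<lambda>t. e * norm (T' t)) integrable_on {x..y}"
            by (rule integrable_on_mult_right[OF nT'i])
          fix t assume t: "t \<in> {x..y}"
          have "dist (E t) (E x) < e" using t xy by (intro hd1) (auto simp: dist_real_def)
          then have "norm (E x - E t) \<le> e" by (simp add: dist_norm norm_minus_commute)
          moreover have "\<i> * T' t * E x - G t = \<i> * T' t * (E x - E t)"
            by (simp add: G_def algebra_simps)
          ultimately show "norm (\<i> * T' t * E x - G t) \<le> e * norm (T' t)"
            by (simp add: norm_mult mult.commute[of e] mult_left_mono)
        qed
        have "integral {x..y} (\<lambda>t. e * norm (T' t)) = e * integral {x..y} (\<lambda>t. norm (T' t))"
          by (simp add: integral_mult_right)
        moreover have "integral {x..y} R = 2 * integral {x..y} (\<lambda>t. norm (T' t))"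
          unfolding R_def[abs_def] by (rule integral_mult_right)
        ultimately show "norm (H y - H x) \<le> e * (integral {a..y} R - integral {a..x} R)"
          using HE N1 N2 norm_triangle_ineq[of "E x * (exp (\<i> * complex_of_real D) - 1 - \<i> * complex_of_real D)"
                                                "integral {x..y} (\<lambda>t. \<i> * T' t * E x - G t)"]
          by (simp add: eR)
      qed
    qed
    then have "E b - integral {a..b} G = E a" by (simp add: H_def)
    then show "E b - E a = integral {a..b} G" by (simp add: algebra_simps)
  qed
  then show ?thesis by (rule hAC_cong) (simp_all add: E_def G_def T'_def)
qed



lemma hAC_unique:
  fixes G1 G2 :: "real \<Rightarrow> 'a::euclidean_space"
  assumes h1: "hAC F G1" and h2: "hAC F G2"
  shows "AE x in lborel. G1 x = G2 x"
proof -
  define D where "D x = G1 x - G2 x" for x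
  have Di: "D integrable_on cbox a b" for a b
    unfolding D_def box_real by (intro integrable_diff hAC_int[OF h1] hAC_int[OF h2])
  have D0: "integral {x..y} D = 0" if "x \<le> y" for x y
  proof -
    have "integral {x..y} D = integral {x..y} G1 - integral {x..y} G2"
      unfolding D_def by (rule integral_diff[OF hAC_int[OF h1] hAC_int[OF h2]])
    also have "\<dots> = 0" using hAC_eq[OF h1 that] hAC_eq[OF h2 that] by simp
    finally show ?thesis .
  qed
  obtain N where N: "negligible N"
    and hN: "\<And>x e. \<lbrakk>x \<notin> N; 0 < e\<rbrakk> \<Longrightarrow>
               \<exists>d>0. \<forall>h. 0 < h \<and> h < d \<longrightarrow>
                         norm(integral (cbox x (x + h *\<^sub>R One)) D /\<^sub>R h ^ DIM(real) - D x) < e"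
    using integrable_ccontinuous_explicit[of D] Di by blast
  have "D x = 0" if "x \<notin> N" for x
  proof -
    have "norm (D x) < e" if "e > 0" for e
    proof -
      obtain d where d: "d > 0" and hd: "\<forall>h. 0 < h \<and> h < d \<longrightarrow>
                         norm(integral (cbox x (x + h *\<^sub>R One)) D /\<^sub>R h ^ DIM(real) - D x) < e"
        using hN[OF \<open>x \<notin> N\<close> \<open>e > 0\<close>] by blast
      have "norm(integral (cbox x (x + (d/2) *\<^sub>R One)) D /\<^sub>R (d/2) ^ DIM(real) - D x) < e"
      proof -
        have "0 < d/2 \<and> d/2 < d" using d by simp
        then show ?thesis using hd by blast
      qed
      moreover have "integral (cbox x (x + (d/2) *\<^sub>R One)) D = 0"
        using D0[of x "x + d/2"] d by simp
      ultimately show ?thesis by simp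
    qed
    then have "norm (D x) \<le> 0"
      by (metis dual_order.refl less_eq_real_def not_le)
    then show ?thesis by simp
  qed
  then have "{x. \<not> G1 x = G2 x} \<subseteq> N" by (auto simp: D_def)
  then have "AE x in lebesgue. G1 x = G2 x"
    using N eventually_ae_filter_negligible by blast
  then show ?thesis by (simp add: AE_completion_iff)
qed



lemma lborel_to_lebesgue:
  fixes G :: "real \<Rightarrow> 'a::euclidean_space"
  assumes "set_integrable lborel S G"
  shows "G absolutely_integrable_on S"
proof -
  have i: "integrable lborel (\<lambda>x. indicator S x *\<^sub>R G x)" using assms by (simp add: set_integrable_def)
  then have m: "(\<lambda>x. indicator S x *\<^sub>R G x) \<in> borel_measurable lborel" by (rule borel_measurable_integrable)
  have "integrable lebesgue (\<lambda>x. indicator S x *\<^sub>R G x)"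
    using integrable_completion[OF m] i by simp
  then show ?thesis by (simp add: set_integrable_def)
qed

lemma ACl_to_hAC:
  fixes F G :: "real \<Rightarrow> 'a::euclidean_space"
  assumes "\<And>a b. set_integrable lborel {a..b} G"
    and "\<And>a b. a \<le> b \<Longrightarrow> F b - F a = (LINT t:{a..b}|lborel. G t)"
  shows "hAC F G"
  unfolding hAC_def
proof (intro conjI allI impI)
  fix a b show "G absolutely_integrable_on {a..b}" by (rule lborel_to_lebesgue[OF assms(1)])
next
  fix a b :: real assume "a \<le> b"
  then show "F b - F a = integral {a..b} G"
    using assms(2) set_borel_integral_eq_integral(2)[OF assms(1)] by simp
qed

lemma hAC_to_ACl:
  fixes F G :: "real \<Rightarrow> 'a::euclidean_space"
  assumes h: "hAC F G" and m: "G \<in> borel_measurable lborel"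
  shows "set_integrable lborel {a..b} G"
    and "a \<le> b \<Longrightarrow> F b - F a = (LINT t:{a..b}|lborel. G t)"
proof -
  have m2: "(\<lambda>x. indicator {a..b} x *\<^sub>R G x) \<in> borel_measurable lborel" using m by measurable
  have "integrable lebesgue (\<lambda>x. indicator {a..b} x *\<^sub>R G x)"
    using hAC_abs[OF h] by (simp add: set_integrable_def)
  then show si: "set_integrable lborel {a..b} G"
    using integrable_completion[OF m2] by (simp add: set_integrable_def)
  assume "a \<le> b"
  then show "F b - F a = (LINT t:{a..b}|lborel. G t)"
    using hAC_eq[OF h] set_borel_integral_eq_integral(2)[OF si] by simp
qed

lemma sq_tri: "(cmod (x + y))^2 \<le> 2*(cmod x)^2 + 2*(cmod y)^2"
proof -
  have "cmod (x + y) \<le> cmod x + cmod y" by (rule norm_triangle_ineq)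
  then have 1: "(cmod (x + y))^2 \<le> (cmod x + cmod y)^2" by (rule power_mono) simp
  have 2: "2*(cmod x)^2 + 2*(cmod y)^2 - (cmod x + cmod y)^2 = (cmod x - cmod y)^2"
    by (simp add: power2_eq_square algebra_simps)
  have 3: "(cmod x - cmod y)^2 \<ge> 0" by simp
  show ?thesis using 1 2 3 by linarith
qed

lemma L2_add: "L2 f \<Longrightarrow> L2 g \<Longrightarrow> L2 (\<lambda>x. f x + g x)"
  unfolding L2_def
proof (elim conjE, intro conjI)
  assume [measurable]: "f \<in> borel_measurable lborel" "g \<in> borel_measurable lborel"
    and i: "integrable lborel (\<lambda>x. (cmod (f x))\<^sup>2)" "integrable lborel (\<lambda>x. (cmod (g x))\<^sup>2)"
  show "(\<lambda>x. f x + g x) \<in> borel_measurable lborel" by measurable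
  show "integrable lborel (\<lambda>x. (cmod (f x + g x))\<^sup>2)"
  proof (rule Bochner_Integration.integrable_bound)
    show "integrable lborel (\<lambda>x. 2*(cmod (f x))\<^sup>2 + 2*(cmod (g x))\<^sup>2)"
      using i by (intro Bochner_Integration.integrable_add integrable_mult_right)
    show "(\<lambda>x. (cmod (f x + g x))\<^sup>2) \<in> borel_measurable lborel" by measurable
    show "AE x in lborel. norm ((cmod (f x + g x))\<^sup>2) \<le> norm (2*(cmod (f x))\<^sup>2 + 2*(cmod (g x))\<^sup>2)"
      using sq_tri by (intro AE_I2) simp
  qed
qed

lemma L2_mult:
  assumes "L2 f" and am[measurable]: "\<alpha> \<in> borel_measurable lborel" and ab: "AE x in lborel. cmod (\<alpha> x) \<le> C"
  shows "L2 (\<lambda>x. \<alpha> x * f x)"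
  using assms(1) unfolding L2_def
proof (elim conjE, intro conjI)
  assume [measurable]: "f \<in> borel_measurable lborel"
    and i: "integrable lborel (\<lambda>x. (cmod (f x))\<^sup>2)"
  show "(\<lambda>x. \<alpha> x * f x) \<in> borel_measurable lborel" by measurable
  show "integrable lborel (\<lambda>x. (cmod (\<alpha> x * f x))\<^sup>2)"
  proof (rule Bochner_Integration.integrable_bound)
    show "integrable lborel (\<lambda>x. C^2 * (cmod (f x))\<^sup>2)"
      using i by (intro integrable_mult_right)
    show "(\<lambda>x. (cmod (\<alpha> x * f x))\<^sup>2) \<in> borel_measurable lborel" by measurable
    show "AE x in lborel. norm ((cmod (\<alpha> x * f x))\<^sup>2) \<le> norm (C^2 * (cmod (f x))\<^sup>2)"
      using ab
    proof eventually_elim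
      fix x assume "cmod (\<alpha> x) \<le> C"
      then have "(cmod (\<alpha> x))^2 \<le> C^2" by (rule power_mono) simp
      then have "(cmod (\<alpha> x))^2 * (cmod (f x))^2 \<le> C^2 * (cmod (f x))^2"
        by (rule mult_right_mono) simp
      then show "norm ((cmod (\<alpha> x * f x))\<^sup>2) \<le> norm (C^2 * (cmod (f x))\<^sup>2)"
        by (simp add: norm_mult power_mult_distrib)
    qed
  qed
qed

lemma hAC_comb:
  fixes \<alpha> \<beta> f g :: "real \<Rightarrow> complex"
  assumes "hAC \<alpha> \<alpha>'" "hAC \<beta> \<beta>'" "hAC f f'" "hAC g g'"
  shows "hAC (\<lambda>x. \<alpha> x * f x + \<beta> x * g x)
             (\<lambda>x. (\<alpha>' x * f x + \<alpha> x * f' x) + (\<beta>' x * g x + \<beta> x * g' x))"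
  by (intro hAC_add hAC_mult assms)



lemma vec2_nth [simp]: "vec2 a b $ 1 = a" "vec2 a b $ 2 = b"
  by (simp_all add: vec2_def)

lemma mat2_mult: "mat2 a b c d *v v = vec2 (a * v$1 + b * v$2) (c * v$1 + d * v$2)"
  by (simp add: vec_eq_iff forall_2 matrix_vector_mult_def sum_2 mat2_def vec2_def)

lemma adj_mat2: "adjoint_mat (mat2 a b c d) = mat2 (cnj a) (cnj c) (cnj b) (cnj d)"
  by (simp add: vec_eq_iff forall_2 adjoint_mat_def mat2_def vec2_def)

definition good :: "(real \<Rightarrow> complex) \<Rightarrow> (real \<Rightarrow> complex) \<Rightarrow> bool" where
  "good \<alpha> \<alpha>' \<longleftrightarrow> hAC \<alpha> \<alpha>' \<and> \<alpha> \<in> borel_measurable lborel \<and> (\<forall>x. cmod (\<alpha> x) \<le> 1)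
      \<and> \<alpha>' \<in> borel_measurable lborel \<and> (\<exists>C. AE x in lborel. cmod (\<alpha>' x) \<le> C)"

lemma L2v_iff: "L2v u \<longleftrightarrow> L2 (\<lambda>x. u x $ 1) \<and> L2 (\<lambda>x. u x $ 2)"
  unfolding L2v_def by (simp add: forall_2)

lemma L2_comb:
  assumes "good \<alpha> \<alpha>'" "good \<beta> \<beta>'" "L2 f" "L2 g"
  shows "L2 (\<lambda>x. \<alpha> x * f x + \<beta> x * g x)"
proof (rule L2_add)
  show "L2 (\<lambda>x. \<alpha> x * f x)"
    by (rule L2_mult[OF assms(3), where C=1]) (use assms(1) in \<open>auto simp: good_def\<close>)
  show "L2 (\<lambda>x. \<beta> x * g x)"
    by (rule L2_mult[OF assms(4), where C=1]) (use assms(2) in \<open>auto simp: good_def\<close>)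
qed

lemma L2_deriv:
  assumes "good \<alpha> \<alpha>'" "L2 f" "L2 f'"
  shows "L2 (\<lambda>x. \<alpha>' x * f x + \<alpha> x * f' x)"
proof (rule L2_add)
  obtain C where "AE x in lborel. cmod (\<alpha>' x) \<le> C" using assms(1) by (auto simp: good_def)
  then show "L2 (\<lambda>x. \<alpha>' x * f x)"
    by (intro L2_mult[OF assms(2)]) (use assms(1) in \<open>auto simp: good_def\<close>)
  show "L2 (\<lambda>x. \<alpha> x * f' x)"
    by (rule L2_mult[OF assms(3), where C=1]) (use assms(1) in \<open>auto simp: good_def\<close>)
qed

lemma mat_L2:
  assumes "good \<alpha> \<alpha>'" "good \<beta> \<beta>'" "good \<gamma> \<gamma>'" "good \<delta> \<delta>'" "L2v w"
  shows "L2v (\<lambda>x. mat2 (\<alpha> x) (\<beta> x) (\<gamma> x) (\<delta> x) *v w x)"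
  using assms(5) unfolding L2v_iff mat2_mult vec2_nth
  by (auto intro: L2_comb assms)

definition dvec where
  "dvec \<alpha> \<alpha>' \<beta> \<beta>' \<gamma> \<gamma>' \<delta> \<delta>' w w' x =
     vec2 ((\<alpha>' x * w x $ 1 + \<alpha> x * w' x $ 1) + (\<beta>' x * w x $ 2 + \<beta> x * w' x $ 2))
          ((\<gamma>' x * w x $ 1 + \<gamma> x * w' x $ 1) + (\<delta>' x * w x $ 2 + \<delta> x * w' x $ 2))"

lemma H1_deriv_iff:
  "H1_deriv u u' \<longleftrightarrow> L2v u' \<and> (\<forall>i. (\<forall>a b. set_integrable lborel {a..b} (\<lambda>t. u' t $ i)) \<and>
        (\<forall>a b. a \<le> b \<longrightarrow> u b $ i - u a $ i = (LINT t:{a..b}|lborel. u' t $ i)))"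
  unfolding H1_deriv_def by blast

lemma H1_hAC: "H1_deriv u u' \<Longrightarrow> hAC (\<lambda>x. u x $ i) (\<lambda>x. u' x $ i)"
  unfolding H1_deriv_iff by (intro ACl_to_hAC) auto

lemma hAC_H1: "L2v u' \<Longrightarrow> (\<And>i. hAC (\<lambda>x. u x $ i) (\<lambda>x. u' x $ i)) \<Longrightarrow> H1_deriv u u'"
proof -
  assume l: "L2v u'" and h: "\<And>i. hAC (\<lambda>x. u x $ i) (\<lambda>x. u' x $ i)"
  have m: "(\<lambda>x. u' x $ i) \<in> borel_measurable lborel" for i
    using l by (simp add: L2v_def L2_def)
  show ?thesis unfolding H1_deriv_iff
    using l hAC_to_ACl[OF h m] by blast
qed

lemma mat_H1:
  assumes g: "good \<alpha> \<alpha>'" "good \<beta> \<beta>'" "good \<gamma> \<gamma>'" "good \<delta> \<delta>'" and w: "L2v w" "H1_deriv w w'"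
  shows "H1_deriv (\<lambda>x. mat2 (\<alpha> x) (\<beta> x) (\<gamma> x) (\<delta> x) *v w x) (dvec \<alpha> \<alpha>' \<beta> \<beta>' \<gamma> \<gamma>' \<delta> \<delta>' w w')"
proof (rule hAC_H1)
  have w': "L2v w'" using w(2) by (simp add: H1_deriv_def)
  show "L2v (dvec \<alpha> \<alpha>' \<beta> \<beta>' \<gamma> \<gamma>' \<delta> \<delta>' w w')"
    using w(1) w' unfolding L2v_iff dvec_def vec2_nth
    by (auto intro!: L2_add[OF L2_deriv[OF g(1)] L2_deriv[OF g(2)]] L2_add[OF L2_deriv[OF g(3)] L2_deriv[OF g(4)]])
  have hg: "hAC \<alpha> \<alpha>'" "hAC \<beta> \<beta>'" "hAC \<gamma> \<gamma>'" "hAC \<delta> \<delta>'" using g by (simp_all add: good_def)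
  have hw: "hAC (\<lambda>x. w x $ i) (\<lambda>x. w' x $ i)" for i by (rule H1_hAC[OF w(2)])
  fix i :: 2
  show "hAC (\<lambda>x. (mat2 (\<alpha> x) (\<beta> x) (\<gamma> x) (\<delta> x) *v w x) $ i)
            (\<lambda>x. dvec \<alpha> \<alpha>' \<beta> \<beta>' \<gamma> \<gamma>' \<delta> \<delta>' w w' x $ i)"
  proof (cases "i = 1")
    case True
    then show ?thesis unfolding True mat2_mult dvec_def vec2_nth
      by (intro hAC_comb hg hw)
  next
    case False
    then have i2: "i = 2" using exhaust_2[of i] by blast
    then show ?thesis unfolding i2 mat2_mult dvec_def vec2_nth
      by (intro hAC_comb hg hw)
  qed
qed

lemma mat_inv:
  fixes a b :: complex
  assumes "a * b = 1/2"
  shows "mat2 b b a (-a) *v (mat2 a b a (-b) *v y) = y"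
    and "mat2 a b a (-b) *v (mat2 b b a (-a) *v y) = y"
proof -
  have "b * (a * y $ 1 + b * y $ 2) + b * (a * y $ 1 + - b * y $ 2) = 2 * (a * b) * y $ 1"
    by (simp add: algebra_simps)
  moreover have "a * (a * y $ 1 + b * y $ 2) + - a * (a * y $ 1 + - b * y $ 2) = 2 * (a * b) * y $ 2"
    by (simp add: algebra_simps)
  ultimately show "mat2 b b a (-a) *v (mat2 a b a (-b) *v y) = y"
    using assms by (simp add: mat2_mult vec_eq_iff forall_2)
next
  have "a * (b * y $ 1 + b * y $ 2) + b * (a * y $ 1 + - a * y $ 2) = 2 * (a * b) * y $ 1"
    by (simp add: algebra_simps)
  moreover have "a * (b * y $ 1 + b * y $ 2) + - b * (a * y $ 1 + - a * y $ 2) = 2 * (a * b) * y $ 2"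
    by (simp add: algebra_simps)
  ultimately show "mat2 a b a (-b) *v (mat2 b b a (-a) *v y) = y"
    using assms by (simp add: mat2_mult vec_eq_iff forall_2)
qed



lemma e_sq: "(exp (\<i> * complex_of_real ((p - pi/2)/2)))^2 = -\<i> * exp(\<i> * complex_of_real p)"
proof -
  have "(exp (\<i> * complex_of_real ((p - pi/2)/2)))^2 = exp (2 * (\<i> * complex_of_real ((p - pi/2)/2)))"
    by (simp only: power2_eq_square exp_add[symmetric] mult_2)
  also have "2 * (\<i> * complex_of_real ((p - pi/2)/2)) = \<i> * complex_of_real p + \<i> * complex_of_real (-pi/2)"
    by (simp add: field_simps)
  also have "exp (\<i> * complex_of_real p + \<i> * complex_of_real (-pi/2)) = exp (\<i> * complex_of_real p) * exp (\<i> * complex_of_real (-pi/2))"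
    by (rule exp_add)
  also have "exp (\<i> * complex_of_real (-pi/2)) = -\<i>"
    by (subst cis_conv_exp[symmetric]) (simp add: complex_eq_iff)
  finally show ?thesis by simp
qed

lemma cnj_e: "cnj (exp (\<i> * complex_of_real t)) = inverse (exp (\<i> * complex_of_real t))"
  by (simp add: exp_cnj exp_minus[symmetric])

lemma exp_neg: "exp (\<i> * complex_of_real (- t)) = inverse (exp (\<i> * complex_of_real t))"
  by (simp add: exp_minus[symmetric])

lemma alg1:
 fixes e sq r c ua ub wa wb :: complex
 assumes e: "e \<noteq> 0" and s: "sq * sq = 2"
 shows "\<i> * wa - \<i> * (\<i> * r * e^2) * ub = (e/sq) * (-(c - r) * (inverse e/sq*ua + e/sq*ub) + \<i> * ((\<i>*(-c)*inverse e/sq*ua + inverse e/sq*wa) + (-(\<i>*c*e/sq)*ub + -(e/sq)*wb))) + (e/sq) * (\<i> * ((\<i>*(-c)*inverse e/sq*ua + inverse e/sq*wa) + (\<i>*c*e/sq*ub + e/sq*wb)) - (c + r) * (inverse e/sq*ua + -(e/sq)*ub))"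
proof -
  have sq: "sq \<noteq> 0" using s by auto
  show ?thesis using e sq s
    by (simp add: field_simps power2_eq_square) (algebra)
qed

lemma alg2:
 fixes e sq r c ua ub wa wb :: complex
 assumes e: "e \<noteq> 0" and s: "sq * sq = 2"
 shows "\<i> * (-\<i> * r * inverse e^2) * ua - \<i> * wb = (inverse e/sq) * (-(c - r) * (inverse e/sq*ua + e/sq*ub) + \<i> * ((\<i>*(-c)*inverse e/sq*ua + inverse e/sq*wa) + (-(\<i>*c*e/sq)*ub + -(e/sq)*wb))) + -(inverse e/sq) * (\<i> * ((\<i>*(-c)*inverse e/sq*ua + inverse e/sq*wa) + (\<i>*c*e/sq*ub + e/sq*wb)) - (c + r) * (inverse e/sq*ua + -(e/sq)*ub))"
proof -
  have sq: "sq \<noteq> 0" using s by auto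
  show ?thesis using e sq s
    by (simp add: field_simps power2_eq_square) (algebra)
qed

lemma alg_main:
  fixes e sq r c ua ub wa wb a b a' b' Q :: complex
  assumes e: "e \<noteq> 0" and s: "sq * sq = 2"
    and ha: "a = inverse e / sq" and hb: "b = e / sq" and ha': "a' = \<i> * (-c) * inverse e / sq"
    and hb': "b' = \<i> * c * e / sq" and hQ: "Q = \<i> * r * e^2" and hQc: "cnj Q = -\<i> * r * inverse e^2"
  shows "vec2 (\<i> * wa - \<i> * Q * ub) (\<i> * cnj Q * ua - \<i> * wb) =
    mat2 b b a (-a) *v vec2 (-(c - r) * (a*ua + b*ub) + \<i> * ((a'*ua + a*wa) + (- b'*ub + - b*wb)))
                            (\<i> * ((a'*ua + a*wa) + (b'*ub + b*wb)) - (c + r) * (a*ua + - b*ub))"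
  unfolding mat2_mult vec2_nth hQc
  unfolding hQ ha hb ha' hb'
  using alg1[OF e s, where r=r and c=c and ua=ua and ub=ub and wa=wa and wb=wb] alg2[OF e s, where r=r and c=c and ua=ua and ub=ub and wa=wa and wb=wb]
  by simp



theorem lemma2p1:
  fixes q :: "real \<Rightarrow> complex" and phi dphi :: "real \<Rightarrow> real"
  defines "um \<equiv> (\<lambda>x. dphi x / 2 - cmod (q x))"
      and "up \<equiv> (\<lambda>x. dphi x / 2 + cmod (q x))"
  assumes polar: "\<And>x. q x = complex_of_real (cmod (q x)) * exp (\<i> * complex_of_real (phi x))"
      and nonvan: "\<And>x. q x \<noteq> 0"
      and qbdd: "ess_bounded (\<lambda>x. cmod (q x))"
      and phiAC: "loc_AC_with_deriv phi dphi"
      and dphibdd: "ess_bounded dphi"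
      and umbdd: "ess_bounded um"
      and upbdd: "ess_bounded up"
  shows "bij_betw (\<lambda>u x. Mmat phi x *v u x) L2set L2set
       \<and> bij_betw (\<lambda>u x. Mmat phi x *v u x) H1set H1set
       \<and> (\<forall>u u' v'. u \<in> H1set \<longrightarrow> H1_deriv u u' \<longrightarrow>
             H1_deriv (\<lambda>x. Mmat phi x *v u x) v' \<longrightarrow>
             (AE x in lborel. Lax_op q u u' x
                = adjoint_mat (Mmat phi x) *v calL_op um up (\<lambda>y. Mmat phi y *v u y) v' x))"
proof -
  obtain Cd where Cd: "AE x in lborel. \<bar>dphi x\<bar> \<le> Cd" and dm: "dphi \<in> borel_measurable lborel"
    using dphibdd unfolding ess_bounded_def by blast
  have dmb[measurable]: "dphi \<in> borel_measurable borel" using dm by simp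
  have phiH: "hAC phi dphi"
    using phiAC unfolding loc_AC_with_deriv_def by (intro ACl_to_hAC) auto
  define \<theta> where "\<theta> x = (phi x - pi/2)/2" for x
  define \<theta>' where "\<theta>' x = dphi x / 2" for x
  have thH: "hAC \<theta> \<theta>'"
    by (rule hAC_cong[OF hAC_scale[OF phiH, of "1/2" "-pi/4"]]) (simp_all add: \<theta>_def \<theta>'_def field_simps)
  have nthH: "hAC (\<lambda>x. - \<theta> x) (\<lambda>x. - \<theta>' x)"
    by (rule hAC_cong[OF hAC_scale[OF thH, of "-1" 0]]) simp_all
  define e1 where "e1 x = exp (\<i> * complex_of_real (- \<theta> x))" for x
  define e2 where "e2 x = exp (\<i> * complex_of_real (\<theta> x))" for x
  have e1H: "hAC e1 (\<lambda>x. \<i> * complex_of_real (- \<theta>' x) * e1 x)"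
    unfolding e1_def by (rule hAC_exp[OF nthH])
  have e2H: "hAC e2 (\<lambda>x. \<i> * complex_of_real (\<theta>' x) * e2 x)"
    unfolding e2_def by (rule hAC_exp[OF thH])
  have e1m[measurable]: "e1 \<in> borel_measurable borel"
    by (rule borel_measurable_continuous_onI[OF hAC_cont[OF e1H]])
  have e2m[measurable]: "e2 \<in> borel_measurable borel"
    by (rule borel_measurable_continuous_onI[OF hAC_cont[OF e2H]])
  have th'm[measurable]: "\<theta>' \<in> borel_measurable borel" unfolding \<theta>'_def[abs_def] by measurable
  have n1: "cmod (e1 x) = 1" for x by (simp add: e1_def)
  have n2: "cmod (e2 x) = 1" for x by (simp add: e2_def)
  have e12: "e1 x = inverse (e2 x)" for x unfolding e1_def e2_def by (rule exp_neg)
  define sq where "sq = complex_of_real (sqrt 2)"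
  have sq2: "sq * sq = 2" by (simp add: sq_def of_real_mult[symmetric])
  have sqn: "cmod sq = sqrt 2" by (simp add: sq_def)
  have s1: "1 \<le> sqrt 2" using real_sqrt_le_mono[of 1 2] by simp
  have cnjsq: "cnj sq = sq" by (simp add: sq_def)
  define A where "A x = e1 x / sq" for x
  define B where "B x = e2 x / sq" for x
  define A' where "A' x = \<i> * complex_of_real (- \<theta>' x) * e1 x / sq" for x
  define B' where "B' x = \<i> * complex_of_real (\<theta>' x) * e2 x / sq" for x
  have AH: "hAC A A'"
    by (rule hAC_cong[OF hAC_cmult[OF e1H, of "inverse sq"]]) (simp_all add: A_def A'_def divide_inverse ac_simps)
  have BH: "hAC B B'"
    by (rule hAC_cong[OF hAC_cmult[OF e2H, of "inverse sq"]]) (simp_all add: B_def B'_def divide_inverse ac_simps)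
  have nAH: "hAC (\<lambda>x. - A x) (\<lambda>x. - A' x)"
    by (rule hAC_cong[OF hAC_cmult[OF AH, of "-1"]]) simp_all
  have nBH: "hAC (\<lambda>x. - B x) (\<lambda>x. - B' x)"
    by (rule hAC_cong[OF hAC_cmult[OF BH, of "-1"]]) simp_all
  have Am[measurable]: "A \<in> borel_measurable borel" unfolding A_def[abs_def] by measurable
  have Bm[measurable]: "B \<in> borel_measurable borel" unfolding B_def[abs_def] by measurable
  have A'm[measurable]: "A' \<in> borel_measurable borel" unfolding A'_def[abs_def] by measurable
  have B'm[measurable]: "B' \<in> borel_measurable borel" unfolding B'_def[abs_def] by measurable
  have An: "cmod (A x) \<le> 1" for x
  proof -
    have "cmod (A x) = 1 / sqrt 2" by (simp add: A_def norm_divide n1 sqn)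
    also have "\<dots> \<le> 1" using s1 by simp
    finally show ?thesis .
  qed
  have Bn: "cmod (B x) \<le> 1" for x
  proof -
    have "cmod (B x) = 1 / sqrt 2" by (simp add: B_def norm_divide n2 sqn)
    also have "\<dots> \<le> 1" using s1 by simp
    finally show ?thesis .
  qed
  have dbound: "\<bar>dphi x\<bar> / 2 / sqrt 2 \<le> \<bar>dphi x\<bar>" for x
  proof -
    have "\<bar>dphi x\<bar> / 2 / sqrt 2 \<le> \<bar>dphi x\<bar> / 2 / 1"
      by (rule divide_left_mono) (use s1 in auto)
    then show ?thesis by simp
  qed
  have A'n: "cmod (A' x) \<le> \<bar>dphi x\<bar>" for x
  proof -
    have "cmod (A' x) = \<bar>dphi x\<bar> / 2 / sqrt 2" by (simp add: A'_def \<theta>'_def norm_divide norm_mult n1 sqn)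
    then show ?thesis using dbound by simp
  qed
  have B'n: "cmod (B' x) \<le> \<bar>dphi x\<bar>" for x
  proof -
    have "cmod (B' x) = \<bar>dphi x\<bar> / 2 / sqrt 2" by (simp add: B'_def \<theta>'_def norm_divide norm_mult n2 sqn)
    then show ?thesis using dbound by simp
  qed
  have A'ae: "AE x in lborel. cmod (A' x) \<le> Cd" using Cd by eventually_elim (rule order_trans[OF A'n])
  have B'ae: "AE x in lborel. cmod (B' x) \<le> Cd" using Cd by eventually_elim (rule order_trans[OF B'n])
  have gA: "good A A'" unfolding good_def using AH An A'ae by auto
  have gB: "good B B'" unfolding good_def using BH Bn B'ae by auto
  have gnA: "good (\<lambda>x. - A x) (\<lambda>x. - A' x)" unfolding good_def using nAH An A'ae by auto
  have gnB: "good (\<lambda>x. - B x) (\<lambda>x. - B' x)" unfolding good_def using nBH Bn B'ae by auto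
  have Mform: "Mmat phi x = mat2 (A x) (B x) (A x) (- B x)" for x
    by (simp add: Mmat_def Let_def A_def B_def e1_def e2_def \<theta>_def sq_def)
  have Madj: "adjoint_mat (Mmat phi x) = mat2 (B x) (B x) (A x) (- A x)" for x
    unfolding Mform adj_mat2 by (simp add: A_def B_def e1_def e2_def cnjsq exp_cnj)
  have AB: "A x * B x = 1/2" for x
  proof -
    have "e2 x \<noteq> 0" by (simp add: e2_def)
    then have "e1 x * e2 x = 1" by (simp add: e12)
    then have "A x * B x = 1 / (sq * sq)" by (simp add: A_def B_def)
    then show ?thesis by (simp add: sq2)
  qed
  have Minv1: "adjoint_mat (Mmat phi x) *v (Mmat phi x *v y) = y" for x y
    unfolding Madj unfolding Mform by (rule mat_inv(1)[OF AB])
  have Minv2: "Mmat phi x *v (adjoint_mat (Mmat phi x) *v y) = y" for x y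
    unfolding Madj unfolding Mform by (rule mat_inv(2)[OF AB])
  have L2M: "L2v (\<lambda>x. Mmat phi x *v u x)" if "L2v u" for u
    using mat_L2[OF gA gB gA gnB that] by (simp add: Mform)
  have L2A: "L2v (\<lambda>x. adjoint_mat (Mmat phi x) *v u x)" if "L2v u" for u
    using mat_L2[OF gB gB gA gnA that] by (simp add: Madj)
  have H1M: "H1_deriv (\<lambda>x. Mmat phi x *v u x) (dvec A A' B B' A A' (\<lambda>x. - B x) (\<lambda>x. - B' x) u u')"
    if "L2v u" "H1_deriv u u'" for u u'
    using mat_H1[OF gA gB gA gnB that] by (simp add: Mform)
  have H1A: "H1_deriv (\<lambda>x. adjoint_mat (Mmat phi x) *v u x) (dvec B B' B B' A A' (\<lambda>x. - A x) (\<lambda>x. - A' x) u u')"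
    if "L2v u" "H1_deriv u u'" for u u'
    using mat_H1[OF gB gB gA gnA that] by (simp add: Madj)
  have inj: "inj_on (\<lambda>u x. Mmat phi x *v u x) S" for S
  proof (rule inj_onI)
    fix u w assume eq: "(\<lambda>x. Mmat phi x *v u x) = (\<lambda>x. Mmat phi x *v w x)"
    show "u = w"
    proof
      fix x
      have "Mmat phi x *v u x = Mmat phi x *v w x" using fun_cong[OF eq, of x] by simp
      then have "adjoint_mat (Mmat phi x) *v (Mmat phi x *v u x) = adjoint_mat (Mmat phi x) *v (Mmat phi x *v w x)"
        by (rule arg_cong)
      then show "u x = w x" by (simp only: Minv1)
    qed
  qed
  have backM: "w = (\<lambda>x. Mmat phi x *v (adjoint_mat (Mmat phi x) *v w x))" for w
    by (simp add: Minv2)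
  have bij1: "bij_betw (\<lambda>u x. Mmat phi x *v u x) L2set L2set"
    unfolding bij_betw_def
  proof (intro conjI inj)
    show "(\<lambda>u x. Mmat phi x *v u x) ` L2set = L2set"
    proof
      show "(\<lambda>u x. Mmat phi x *v u x) ` L2set \<subseteq> L2set"
        using L2M by (auto simp: L2set_def)
      show "L2set \<subseteq> (\<lambda>u x. Mmat phi x *v u x) ` L2set"
      proof
        fix w assume "w \<in> L2set"
        then have "(\<lambda>x. adjoint_mat (Mmat phi x) *v w x) \<in> L2set" using L2A by (simp add: L2set_def)
        then show "w \<in> (\<lambda>u x. Mmat phi x *v u x) ` L2set"
          by (intro image_eqI[where x="\<lambda>x. adjoint_mat (Mmat phi x) *v w x"]) (simp_all add: Minv2)
      qed
    qed
  qed
  have bij2: "bij_betw (\<lambda>u x. Mmat phi x *v u x) H1set H1set"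
    unfolding bij_betw_def
  proof (intro conjI inj)
    show "(\<lambda>u x. Mmat phi x *v u x) ` H1set = H1set"
    proof
      show "(\<lambda>u x. Mmat phi x *v u x) ` H1set \<subseteq> H1set"
        using L2M H1M by (auto simp: H1set_def)
      show "H1set \<subseteq> (\<lambda>u x. Mmat phi x *v u x) ` H1set"
      proof
        fix w assume "w \<in> H1set"
        then have "(\<lambda>x. adjoint_mat (Mmat phi x) *v w x) \<in> H1set" using L2A H1A by (auto simp: H1set_def)
        then show "w \<in> (\<lambda>u x. Mmat phi x *v u x) ` H1set"
          by (intro image_eqI[where x="\<lambda>x. adjoint_mat (Mmat phi x) *v w x"]) (simp_all add: Minv2)
      qed
    qed
  qed
  have ae: "AE x in lborel. Lax_op q u u' x
                = adjoint_mat (Mmat phi x) *v calL_op um up (\<lambda>y. Mmat phi y *v u y) v' x"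
    if uH: "u \<in> H1set" and du: "H1_deriv u u'" and dv: "H1_deriv (\<lambda>x. Mmat phi x *v u x) v'" for u u' v'
  proof -
    have Lu: "L2v u" using uH by (simp add: H1set_def)
    define V' where "V' = dvec A A' B B' A A' (\<lambda>x. - B x) (\<lambda>x. - B' x) u u'"
    have dV: "H1_deriv (\<lambda>x. Mmat phi x *v u x) V'" unfolding V'_def by (rule H1M[OF Lu du])
    have ae1: "AE x in lborel. v' x $ 1 = V' x $ 1" by (rule hAC_unique[OF H1_hAC[OF dv] H1_hAC[OF dV]])
    have ae2: "AE x in lborel. v' x $ 2 = V' x $ 2" by (rule hAC_unique[OF H1_hAC[OF dv] H1_hAC[OF dV]])
    show ?thesis using ae1 ae2
    proof eventually_elim
      fix x assume hv1: "v' x $ 1 = V' x $ 1" and hv2: "v' x $ 2 = V' x $ 2"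
      define c where "c = complex_of_real (\<theta>' x)"
      define r where "r = complex_of_real (cmod (q x))"
      have C: "calL_op um up (\<lambda>y. Mmat phi y *v u y) v' x =
         vec2 (-(c - r) * (A x * u x $ 1 + B x * u x $ 2) + \<i> * ((A' x * u x $ 1 + A x * u' x $ 1) + (- B' x * u x $ 2 + - B x * u' x $ 2)))
              (\<i> * ((A' x * u x $ 1 + A x * u' x $ 1) + (B' x * u x $ 2 + B x * u' x $ 2)) - (c + r) * (A x * u x $ 1 + - B x * u x $ 2))"
        unfolding calL_op_def Mform mat2_mult vec2_nth hv1 hv2
        by (simp add: V'_def dvec_def um_def up_def c_def r_def \<theta>'_def)
      have e: "e2 x \<noteq> 0" by (simp add: e2_def)
      have ha: "A x = inverse (e2 x) / sq" by (simp add: A_def e12)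
      have hb: "B x = e2 x / sq" by (simp add: B_def)
      have ha': "A' x = \<i> * (-c) * inverse (e2 x) / sq" by (simp add: A'_def e12 c_def)
      have hb': "B' x = \<i> * c * e2 x / sq" by (simp add: B'_def c_def)
      have hQ: "q x = \<i> * r * (e2 x)^2"
      proof -
        have "(e2 x)^2 = -\<i> * exp (\<i> * complex_of_real (phi x))"
          unfolding e2_def \<theta>_def by (rule e_sq)
        then have "\<i> * r * (e2 x)^2 = \<i> * r * (-\<i> * exp (\<i> * complex_of_real (phi x)))" by (simp only:)
        also have "\<dots> = r * exp (\<i> * complex_of_real (phi x))"
        proof -
          have ii: "\<i> * \<i> = (-1::complex)" by simp
          show ?thesis using ii by algebra
        qed
        also have "\<dots> = q x" using polar[of x] by (simp add: r_def)
        finally show ?thesis by simp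
      qed
      have hQc: "cnj (q x) = -\<i> * r * inverse (e2 x)^2"
        unfolding hQ by (simp add: r_def e2_def cnj_e)
      show "Lax_op q u u' x = adjoint_mat (Mmat phi x) *v calL_op um up (\<lambda>y. Mmat phi y *v u y) v' x"
        unfolding Lax_op_def Madj C
        by (rule alg_main[OF e sq2 ha hb ha' hb' hQ hQc])
    qed
  qed
  show ?thesis using bij1 bij2 ae by blast
qed

end
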